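(* Let $\mathcal{S}$ be a set of triangles in a graph with $|\mathcal{S}|>1$ such that every two distinct triangles $t,t'\in\mathcal{S}$ satisfy $|E(t)\cap E(t')|=1$. Then either $|\bigcap_{t\in\mathcal{S}}E(t)|=1$, or $|\mathcal{S}|\leq 4$ and the vertex set $\bigcup_{t\in\mathcal{S}}V(t)$ induces a $K_4$.
   Context: A triangle is a set of three pairwise adjacent vertices of a simple graph; $V(t)$ and $E(t)$ denote its vertex set and its set of three edges. *)

theory Defs
  imports Main
begin

definition simple_graph :: "'a set \<Rightarrow> ('a \<Rightarrow> 'a \<Rightarrow> bool) \<Rightarrow> bool" where
  "simple_graph V adj \<longleftrightarrow> finite V \<and> (\<forall>x y. adj x y \<longrightarrow> adj y x)
     \<and> (\<forall>x. \<not> adj x x) \<and> (\<forall>x y. adj x y \<longrightarrow> x \<in> V \<and> y \<in> V)"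

definition triangle :: "'a set \<Rightarrow> ('a \<Rightarrow> 'a \<Rightarrow> bool) \<Rightarrow> 'a set \<Rightarrow> bool" where
  "triangle V adj t \<longleftrightarrow> t \<subseteq> V \<and> card t = 3 \<and> (\<forall>x\<in>t. \<forall>y\<in>t. x \<noteq> y \<longrightarrow> adj x y)"

definition tri_edges :: "'a set \<Rightarrow> 'a set set" where
  "tri_edges t = {e. e \<subseteq> t \<and> card e = 2}"

definition induces_K4 :: "('a \<Rightarrow> 'a \<Rightarrow> bool) \<Rightarrow> 'a set \<Rightarrow> bool" where
  "induces_K4 adj U \<longleftrightarrow> card U = 4 \<and> (\<forall>x\<in>U. \<forall>y\<in>U. x \<noteq> y \<longrightarrow> adj x y)"

end

theory Submission
  imports Defs
begin

lemma edges_int: "tri_edges t \<inter> tri_edges t' = tri_edges (t \<inter> t')"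
  unfolding tri_edges_def by auto

lemma card_edges: "finite A \<Longrightarrow> card (tri_edges A) = card A choose 2"
  unfolding tri_edges_def using n_subsets by blast

lemma key:
  assumes "card t = 3" "card (tri_edges t \<inter> tri_edges t') = 1"
  shows "card (t \<inter> t') = 2"
proof -
  have f: "finite t" using assms(1) by (metis card.infinite zero_neq_numeral)
  hence f2: "finite (t \<inter> t')" by simp
  have le: "card (t \<inter> t') \<le> 3" using assms(1) f by (metis card_mono inf_le1)
  have "card (t \<inter> t') choose 2 = 1" using assms(2) card_edges[OF f2] edges_int by metis
  moreover have "k \<le> 3 \<Longrightarrow> k choose 2 = 1 \<Longrightarrow> k = 2" for k :: nat
    by (cases k; cases "k - 1"; cases "k - 2"; cases "k - 3"; auto simp: numeral_eq_Suc)
  ultimately show ?thesis using le by blast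
qed

lemma lem1:
  assumes "card t = 3" "card (t \<inter> {x,y,a}) = 2" "card (t \<inter> {x,y,b}) = 2" "x \<noteq> y"
    "\<not> t \<subseteq> {x,y,a,b}" "a \<noteq> b"
  shows "{x,y} \<subseteq> t"
proof -
  obtain c where c: "c \<in> t" "c \<notin> {x,y,a,b}" using assms(5) by blast
  have f: "finite t" using assms(1) by (metis card.infinite zero_neq_numeral)
  have ct: "card (t - {c}) = 2" using c f assms(1) by simp
  have "t \<inter> {x,y,a} = (t - {c}) \<inter> {x,y,a}" using c by auto
  hence A: "(t - {c}) \<inter> {x,y,a} = t - {c}" using ct assms(2) f
    by (metis card_subset_eq finite_Diff inf_le1)
  have "t \<inter> {x,y,b} = (t - {c}) \<inter> {x,y,b}" using c by auto
  hence B: "(t - {c}) \<inter> {x,y,b} = t - {c}" using ct assms(3) f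
    by (metis card_subset_eq finite_Diff inf_le1)
  have "t - {c} \<subseteq> {x,y,a} \<inter> {x,y,b}" using A B by blast
  hence "t - {c} \<subseteq> {x,y}" using assms(6) by auto
  moreover have "card {x,y} = 2" using assms(4) by simp
  ultimately have "t - {c} = {x,y}" using ct by (metis card_subset_eq finite.emptyI finite_insert)
  thus ?thesis by blast
qed


lemma lem2:
  assumes "card t3 = 3" "t3 \<subseteq> U" "\<not> {x,y} \<subseteq> t3" "{x,y} \<subseteq> t" "card t = 3"
    "card (t \<inter> t3) = 2" "x \<noteq> y" "x \<in> U" "y \<in> U"
  shows "t \<subseteq> U"
proof (rule ccontr)
  assume "\<not> t \<subseteq> U"
  then obtain c where c: "c \<in> t" "c \<notin> U" by blast
  have f: "finite t" using assms(5) by (metis card.infinite zero_neq_numeral)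
  have "t \<inter> t3 \<subseteq> {x,y} \<inter> t3"
  proof
    fix z assume z: "z \<in> t \<inter> t3"
    have "z \<noteq> c" using z c assms(2) by blast
    have cxy: "c \<noteq> x" "c \<noteq> y" using c assms(8,9) by auto
    have "{x,y,c} = t" using assms(4,5,7) c f cxy
      by (intro card_subset_eq) (auto simp: card_insert_if)
    thus "z \<in> {x,y} \<inter> t3" using z \<open>z \<noteq> c\<close> by blast
  qed
  moreover have "{x,y} \<inter> t3 \<subset> {x,y}" using assms(3) by blast
  hence "card ({x,y} \<inter> t3) < 2" using assms(7) by (metis card_2_iff finite.emptyI finite_insert psubset_card_mono)
  ultimately have "card (t \<inter> t3) < 2"
    by (meson card_mono finite.emptyI finite_Int finite_insert le_less_trans)
  thus False using assms(6) by simp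
qed


theorem claim22:
  fixes V :: "'a set" and adj :: "'a \<Rightarrow> 'a \<Rightarrow> bool" and S :: "'a set set"
  assumes "simple_graph V adj"
    and "\<forall>t\<in>S. triangle V adj t"
    and "card S > 1"
    and "\<forall>t\<in>S. \<forall>t'\<in>S. t \<noteq> t' \<longrightarrow> card (tri_edges t \<inter> tri_edges t') = 1"
  shows "card (\<Inter>t\<in>S. tri_edges t) = 1 \<or> (card S \<le> 4 \<and> induces_K4 adj (\<Union>S))"
proof -
  have fS: "finite S" using assms(3) card.infinite by fastforce
  have c3: "\<And>t. t \<in> S \<Longrightarrow> card t = 3" using assms(2) unfolding triangle_def by blast
  have ft: "\<And>t. t \<in> S \<Longrightarrow> finite t" using c3 by (metis card.infinite zero_neq_numeral)
  have adjt: "\<And>t p q. t \<in> S \<Longrightarrow> p \<in> t \<Longrightarrow> q \<in> t \<Longrightarrow> p \<noteq> q \<Longrightarrow> adj p q"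
    using assms(2) unfolding triangle_def by blast
  have i2: "\<And>t t'. t \<in> S \<Longrightarrow> t' \<in> S \<Longrightarrow> t \<noteq> t' \<Longrightarrow> card (t \<inter> t') = 2"
    using assms(4) c3 key by blast
  obtain t1 t2 where t12: "t1 \<in> S" "t2 \<in> S" "t1 \<noteq> t2"
    using assms(3) fS card_le_Suc0_iff_eq[OF fS] by (metis One_nat_def not_le)
  obtain x y where xy: "t1 \<inter> t2 = {x,y}" "x \<noteq> y" using i2[OF t12] card_2_iff by metis
  have "card (t1 - t1 \<inter> t2) = 1" using c3[OF t12(1)] ft[OF t12(1)] i2[OF t12]
    by (simp add: card_Diff_subset)
  then obtain a where a: "t1 - t1 \<inter> t2 = {a}" using card_1_singleton_iff by (metis One_nat_def)
  have "card (t2 - t1 \<inter> t2) = 1" using c3[OF t12(2)] ft[OF t12(2)] i2[OF t12]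
    by (simp add: card_Diff_subset inf_commute)
  then obtain b where b: "t2 - t1 \<inter> t2 = {b}" using card_1_singleton_iff by (metis One_nat_def)
  have t1e: "t1 = {x,y,a}" using a xy by blast
  have t2e: "t2 = {x,y,b}" using b xy by blast
  have ab: "a \<notin> t2" "b \<notin> t1" using a b by blast+
  hence dist: "a \<noteq> x" "a \<noteq> y" "b \<noteq> x" "b \<noteq> y" "a \<noteq> b" using t1e t2e by auto
  show ?thesis
  proof (cases "\<forall>t\<in>S. {x,y} \<subseteq> t")
    case True
    have ein: "{x,y} \<in> tri_edges t" if "t \<in> S" for t
      using True that xy(2) unfolding tri_edges_def by auto
    have "(\<Inter>t\<in>S. tri_edges t) = {{x,y}}"
    proof
      show "{{x,y}} \<subseteq> (\<Inter>t\<in>S. tri_edges t)" using ein by blast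
    next
      have c1: "card (tri_edges t1 \<inter> tri_edges t2) = 1" using assms(4) t12 by blast
      have "{x,y} \<in> tri_edges t1 \<inter> tri_edges t2" using ein t12 by blast
      hence "tri_edges t1 \<inter> tri_edges t2 = {{x,y}}" using c1
        by (metis card_1_singleton_iff One_nat_def singletonD)
      thus "(\<Inter>t\<in>S. tri_edges t) \<subseteq> {{x,y}}" using t12 by blast
    qed
    thus ?thesis by simp
  next
    case False
    then obtain t3 where t3: "t3 \<in> S" "\<not> {x,y} \<subseteq> t3" by blast
    define U where "U = {x,y,a,b}"
    have n3: "t3 \<noteq> t1" "t3 \<noteq> t2" using t3 t1e t2e by auto
    have t3U: "t3 \<subseteq> U"
      using lem1[of t3 x y a b] c3[OF t3(1)] i2[OF t3(1) t12(1) n3(1)] i2[OF t3(1) t12(2) n3(2)]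
        t1e t2e xy(2) dist(5) t3(2) unfolding U_def by blast
    have allU: "t \<subseteq> U" if "t \<in> S" for t
    proof (cases "t = t1 \<or> t = t2")
      case True thus ?thesis using t1e t2e U_def by auto
    next
      case False
      show ?thesis
      proof (rule ccontr)
        assume nU: "\<not> t \<subseteq> U"
        have "{x,y} \<subseteq> t"
          using lem1[of t x y a b] c3[OF that] i2[OF that t12(1)] i2[OF that t12(2)] False
            t1e t2e xy(2) dist(5) nU unfolding U_def by blast
        moreover hence "t \<noteq> t3" using t3 by blast
        ultimately have "t \<subseteq> U" using lem2[of t3 U x y t] c3 t3 that t3U i2 xy(2) U_def by auto
        thus False using nU by blast
      qed
    qed
    have c43: "(4::nat) choose 3 = 4" by (simp add: numeral_eq_Suc)
    have cU: "card U = 4" using dist xy(2) U_def by auto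
    have "S \<subseteq> {B. B \<subseteq> U \<and> card B = 3}" using allU c3 by blast
    hence "card S \<le> card {B. B \<subseteq> U \<and> card B = 3}"
      by (intro card_mono) (auto simp: U_def)
    also have "\<dots> = 4" using n_subsets[of U 3] cU c43 by (simp add: U_def)
    finally have cS: "card S \<le> 4" .
    have uS: "\<Union>S = U" using allU t12 t1e t2e U_def by blast
    have at3: "a \<in> t3"
    proof (rule ccontr)
      assume "a \<notin> t3"
      hence "t3 \<subseteq> {x,y,b}" using t3U U_def by blast
      hence "t3 = {x,y,b}" using c3[OF t3(1)] dist xy(2)
        by (intro card_subset_eq) auto
      thus False using t3(2) by blast
    qed
    have bt3: "b \<in> t3"
    proof (rule ccontr)
      assume "b \<notin> t3"
      hence "t3 \<subseteq> {x,y,a}" using t3U U_def by blast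
      hence "t3 = {x,y,a}" using c3[OF t3(1)] dist xy(2)
        by (intro card_subset_eq) auto
      thus False using t3(2) by blast
    qed
    have sym: "\<And>p q. adj p q \<Longrightarrow> adj q p" using assms(1) unfolding simple_graph_def by blast
    have e1: "adj x y" "adj x a" "adj y a" using adjt[OF t12(1)] t1e dist xy(2) by auto
    have e2: "adj x b" "adj y b" using adjt[OF t12(2)] t2e dist xy(2) by auto
    have e3: "adj a b" using adjt[OF t3(1) at3 bt3] dist by auto
    have "induces_K4 adj U" unfolding induces_K4_def using cU e1 e2 e3 sym U_def by auto
    thus ?thesis using cS uS by simp
  qed
qed

end
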